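(* Let $\rho,\sigma$ be positive definite density operators on a finite-dimensional Hilbert space $\mathcal{H}$, and let $\mathcal{N}$ be a strictly positive completely positive trace-preserving map from operators on $\mathcal{H}$ to operators on a finite-dimensional Hilbert space, with adjoint $\mathcal{N}^\dagger$. Then $$\lim_{p\to0}\Big[\sigma^{p/2}\,\mathcal{N}^\dagger\big([\mathcal{N}(\sigma)]^{-p/2}[\mathcal{N}(\rho)]^{p}[\mathcal{N}(\sigma)]^{-p/2}\big)\,\sigma^{p/2}\Big]^{1/p}=\exp\big\{\log\sigma+\mathcal{N}^\dagger\big(\log\mathcal{N}(\rho)-\log\mathcal{N}(\sigma)\big)\big\}.$$
   Context: A linear map is strictly positive if it maps positive definite operators to positive definite operators. The adjoint $\mathcal{N}^\dagger$ is defined with respect to the Hilbert–Schmidt inner product, $\mathrm{Tr}\{Y\mathcal{N}(X)\}=\mathrm{Tr}\{\mathcal{N}^\dagger(Y)X\}$; it is unital. $\log$ is the natural logarithm and the limit is with respect to real $p\to0$. *)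

theory Defs
  imports "HOL-Analysis.Analysis"
begin

definition cadj :: "complex^'n^'m \<Rightarrow> complex^'m^'n" where
  "cadj A = (\<chi> i j. cnj (A $ j $ i))"

definition cscaleM :: "complex \<Rightarrow> complex^'n^'m \<Rightarrow> complex^'n^'m" where
  "cscaleM c X = (\<chi> i j. c * X $ i $ j)"

definition sform :: "complex^'n \<Rightarrow> complex^'n^'n \<Rightarrow> complex^'n \<Rightarrow> complex" where
  "sform x A y = (\<Sum>a\<in>UNIV. cnj (x $ a) * (A *v y) $ a)"

definition psd :: "complex^'n^'n \<Rightarrow> bool" where
  "psd A \<longleftrightarrow> (\<forall>x. sform x A x \<in> \<real> \<and> 0 \<le> Re (sform x A x))"

definition posdef :: "complex^'n^'n \<Rightarrow> bool" where
  "posdef A \<longleftrightarrow> (\<forall>x. x \<noteq> 0 \<longrightarrow> sform x A x \<in> \<real> \<and> 0 < Re (sform x A x))"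

definition density :: "complex^'n^'n \<Rightarrow> bool" where
  "density A \<longleftrightarrow> psd A \<and> trace A = 1"

definition unitary :: "complex^'n^'n \<Rightarrow> bool" where
  "unitary U \<longleftrightarrow> cadj U ** U = mat 1 \<and> U ** cadj U = mat 1"

definition rdiag :: "('n \<Rightarrow> real) \<Rightarrow> complex^'n^'n" where
  "rdiag d = (\<chi> i j. if i = j then complex_of_real (d i) else 0)"

definition mfun :: "(real \<Rightarrow> real) \<Rightarrow> complex^'n^'n \<Rightarrow> complex^'n^'n" where
  "mfun f A = (SOME B. \<exists>U (l::'n \<Rightarrow> real). unitary U \<and> A = U ** rdiag l ** cadj U
                        \<and> B = U ** rdiag (f \<circ> l) ** cadj U)"

definition mpow :: "complex^'n^'n \<Rightarrow> real \<Rightarrow> complex^'n^'n" where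
  "mpow A p = mfun (\<lambda>x. x powr p) A"

definition mlog :: "complex^'n^'n \<Rightarrow> complex^'n^'n" where
  "mlog A = mfun ln A"

definition mexp :: "complex^'n^'n \<Rightarrow> complex^'n^'n" where
  "mexp A = mfun exp A"

definition clinear_map :: "(complex^'n^'n \<Rightarrow> complex^'m^'m) \<Rightarrow> bool" where
  "clinear_map N \<longleftrightarrow> (\<forall>X Y c. N (X + Y) = N X + N Y \<and> N (cscaleM c X) = cscaleM c (N X))"

text \<open>Positivity of the k x k block operator [X i j] on (C^n)^k.\<close>
definition block_psd :: "nat \<Rightarrow> (nat \<Rightarrow> nat \<Rightarrow> complex^'n^'n) \<Rightarrow> bool" where
  "block_psd k X \<longleftrightarrow> (\<forall>v :: nat \<Rightarrow> complex^'n.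
     (\<Sum>i<k. \<Sum>j<k. sform (v i) (X i j) (v j)) \<in> \<real> \<and>
     0 \<le> Re (\<Sum>i<k. \<Sum>j<k. sform (v i) (X i j) (v j)))"

text \<open>Complete positivity: id_k \<otimes> N is positive for every k.\<close>
definition completely_positive :: "(complex^'n^'n \<Rightarrow> complex^'m^'m) \<Rightarrow> bool" where
  "completely_positive N \<longleftrightarrow>
     (\<forall>k X. block_psd k X \<longrightarrow> block_psd k (\<lambda>i j. N (X i j)))"

definition trace_preserving :: "(complex^'n^'n \<Rightarrow> complex^'m^'m) \<Rightarrow> bool" where
  "trace_preserving N \<longleftrightarrow> (\<forall>X. trace (N X) = trace X)"

definition strictly_positive :: "(complex^'n^'n \<Rightarrow> complex^'m^'m) \<Rightarrow> bool" where
  "strictly_positive N \<longleftrightarrow> (\<forall>X. posdef X \<longrightarrow> posdef (N X))"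

definition madjoint :: "(complex^'n^'n \<Rightarrow> complex^'m^'m) \<Rightarrow> complex^'m^'m \<Rightarrow> complex^'n^'n" where
  "madjoint N = (SOME M. \<forall>X Y. trace (Y ** N X) = trace (M Y ** X))"

end

theory Submission
  imports Defs
begin



lemma cadj_nth[simp]: "cadj A $ i $ j = cnj (A $ j $ i)"
  by (simp add: cadj_def)

lemma rdiag_nth[simp]: "rdiag d $ i $ j = (if i = j then complex_of_real (d i) else 0)"
  by (simp add: rdiag_def)

lemma cscaleM_nth[simp]: "cscaleM c X $ i $ j = c * X $ i $ j"
  by (simp add: cscaleM_def)

lemma mat_nth: "mat k $ i $ j = (if i = j then k else 0)"
  by (simp add: mat_def)

lemma mmult_nth: "(A ** B) $ i $ j = (\<Sum>k\<in>UNIV. A $ i $ k * B $ k $ j)"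
  by (simp add: matrix_matrix_mult_def)

lemma cadj_cadj[simp]: "cadj (cadj A) = A"
  by (simp add: vec_eq_iff)

lemma cadj_mult: "cadj (A ** B) = cadj B ** (cadj A :: complex^_^_)"
  by (simp add: vec_eq_iff mmult_nth mult.commute)

lemma cadj_add: "cadj (A + B) = cadj A + cadj (B::complex^_^_)"
  by (simp add: vec_eq_iff)

lemma cadj_diff: "cadj (A - B) = cadj A - cadj (B::complex^_^_)"
  by (simp add: vec_eq_iff)

lemma cadj_mat1[simp]: "cadj (mat 1) = (mat 1 :: complex^'n^'n)"
  by (simp add: vec_eq_iff mat_nth)

lemma cadj_rdiag[simp]: "cadj (rdiag d) = rdiag d"
  by (simp add: vec_eq_iff)

lemma cadj_scaleR: "cadj (r *\<^sub>R A) = r *\<^sub>R cadj (A::complex^'n^'m)"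
  by (simp add: vec_eq_iff cadj_def)

lemma mult_rdiag_nth: "(A ** rdiag d) $ i $ j = A $ i $ j * d j"
  by (simp add: mmult_nth if_distrib cong: if_cong)

lemma rdiag_mult_nth: "(rdiag d ** A) $ i $ j = d i * A $ i $ j"
  by (simp add: mmult_nth if_distrib if_distribR cong: if_cong)

lemma rdiag_mult: "rdiag a ** rdiag b = rdiag (\<lambda>i. a i * b i)"
  by (simp add: vec_eq_iff mult_rdiag_nth)

lemma rdiag_one: "rdiag (\<lambda>i. 1) = mat 1"
  by (simp add: vec_eq_iff mat_nth)

lemma rdiag_scaleR: "r *\<^sub>R rdiag d = rdiag (\<lambda>i. r * d i)"
  unfolding vec_eq_iff by (simp add: rdiag_def) (simp add: scaleR_conv_of_real)

lemma rdiag_diff: "rdiag a - rdiag b = rdiag (\<lambda>i. a i - b i)"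
  by (simp add: vec_eq_iff)

lemma rdiag_add: "rdiag a + rdiag b = rdiag (\<lambda>i. a i + b i)"
  by (simp add: vec_eq_iff)

lemma unitaryD1: "unitary U \<Longrightarrow> cadj U ** U = mat 1"
  by (simp add: unitary_def)
lemma unitaryD2: "unitary U \<Longrightarrow> U ** cadj U = mat 1"
  by (simp add: unitary_def)

lemma conj_unitary: "unitary U \<Longrightarrow> U ** rdiag a ** cadj U ** (U ** rdiag b ** cadj U) = U ** rdiag (\<lambda>i. a i * b i) ** cadj U"
proof -
  assume u: "unitary U"
  have "U ** rdiag a ** cadj U ** (U ** rdiag b ** cadj U) = U ** rdiag a ** (cadj U ** U) ** rdiag b ** cadj U"
    by (simp add: matrix_mul_assoc)
  also have "\<dots> = U ** rdiag (\<lambda>i. a i * b i) ** cadj U"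
    using u by (simp add: unitary_def matrix_mul_rid rdiag_mult flip: matrix_mul_assoc)
  finally show ?thesis .
qed

lemma conj_unitary_one: "unitary U \<Longrightarrow> U ** rdiag (\<lambda>i. 1) ** cadj U = mat 1"
  by (simp add: rdiag_one matrix_mul_rid unitary_def)

lemma conj_hermitian: "cadj (U ** rdiag a ** cadj U) = U ** rdiag a ** cadj U"
  by (simp add: cadj_mult matrix_mul_assoc)

lemma fc_unique:
  assumes u: "unitary U" and v: "unitary V"
    and eq: "U ** rdiag l ** cadj U = V ** rdiag m ** cadj V"
  shows "U ** rdiag (f \<circ> l) ** cadj U = V ** rdiag (f \<circ> m) ** cadj V"
proof -
  define W where "W = cadj V ** U"
  have "cadj V ** (U ** rdiag l ** cadj U) ** U = cadj V ** (V ** rdiag m ** cadj V) ** U"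
    using eq by simp
  hence "W ** rdiag l = rdiag m ** W"
    using u v by (simp add: W_def unitary_def matrix_mul_assoc matrix_mul_rid)
       (simp add: matrix_mul_lid flip: matrix_mul_assoc)
  hence e: "W $ i $ j * l j = m i * W $ i $ j" for i j
    by (metis mult_rdiag_nth rdiag_mult_nth)
  have "W $ i $ j * f (l j) = f (m i) * W $ i $ j" for i j
  proof (cases "W $ i $ j = 0")
    case False
    with e[of i j] have "l j = m i" by (simp add: mult.commute)
    thus ?thesis by (simp add: mult.commute)
  qed simp
  hence W2: "W ** rdiag (f \<circ> l) = rdiag (f \<circ> m) ** W"
    by (simp add: vec_eq_iff mult_rdiag_nth rdiag_mult_nth)
  have "U ** rdiag (f \<circ> l) ** cadj U = (V ** cadj V) ** U ** rdiag (f \<circ> l) ** cadj U"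
    using v by (simp add: unitary_def matrix_mul_lid)
  also have "\<dots> = V ** (W ** rdiag (f \<circ> l)) ** cadj U"
    by (simp add: W_def matrix_mul_assoc)
  also have "\<dots> = V ** rdiag (f \<circ> m) ** (cadj V ** (U ** cadj U))"
    unfolding W2 by (simp add: W_def matrix_mul_assoc)
  also have "\<dots> = V ** rdiag (f \<circ> m) ** cadj V"
    using u by (simp add: unitary_def matrix_mul_rid)
  finally show ?thesis .
qed

lemma mfun_eq:
  assumes u: "unitary U" and A: "A = U ** rdiag l ** cadj U"
  shows "mfun f A = U ** rdiag (f \<circ> l) ** cadj U"
proof -
  have "\<exists>V m. unitary V \<and> A = V ** rdiag m ** cadj V \<and> mfun f A = V ** rdiag (f \<circ> m) ** cadj V"
    unfolding mfun_def by (rule someI_ex) (use u A in blast)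
  then obtain V m where "unitary V" "A = V ** rdiag m ** cadj V" "mfun f A = V ** rdiag (f \<circ> m) ** cadj V"
    by blast
  thus ?thesis using fc_unique[OF u \<open>unitary V\<close>, of l m f] A by simp
qed




definition cinner :: "complex^'n \<Rightarrow> complex^'n \<Rightarrow> complex" where
  "cinner x y = (\<Sum>a\<in>UNIV. cnj (x $ a) * y $ a)"

lemma sform_cinner: "sform x A y = cinner x (A *v y)"
  by (simp add: sform_def cinner_def)

lemma scaleR_smult: "t *\<^sub>R x = complex_of_real t *s (x::complex^'n)"
  unfolding vec_eq_iff by simp (simp add: scaleR_conv_of_real)

lemma mat_mult_vec: "mat c *v x = c *s (x::complex^'n)"
  by (simp add: vec_eq_iff matrix_vector_mult_def mat_nth if_distrib if_distribR cong: if_cong)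

lemma cinner_add_left: "cinner (x + y) z = cinner x z + cinner y z"
  by (simp add: cinner_def sum.distrib distrib_right)
lemma cinner_add_right: "cinner z (x + y) = cinner z x + cinner z y"
  by (simp add: cinner_def sum.distrib distrib_left)
lemma cinner_diff_left: "cinner (x - y) z = cinner x z - cinner y z"
  by (simp add: cinner_def sum_subtractf left_diff_distrib)
lemma cinner_diff_right: "cinner z (x - y) = cinner z x - cinner z y"
  by (simp add: cinner_def sum_subtractf right_diff_distrib)
lemma cinner_smult_left: "cinner (c *s x) z = cnj c * cinner x z"
  by (simp add: cinner_def sum_distrib_left mult.assoc)
lemma cinner_smult_right: "cinner z (c *s x) = c * cinner z x"
  by (simp add: cinner_def sum_distrib_left mult.left_commute)
lemma cinner_commute: "cinner x y = cnj (cinner y x)"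
  by (simp add: cinner_def mult.commute)
lemma cinner_zero_right[simp]: "cinner x 0 = 0"
  by (simp add: cinner_def)
lemma cinner_zero_left[simp]: "cinner 0 x = 0"
  by (simp add: cinner_def)
lemma cinner_adj: "cinner x (A *v y) = cinner (cadj A *v x) y"
proof -
  have "cinner x (A *v y) = (\<Sum>a\<in>UNIV. \<Sum>b\<in>UNIV. cnj (x $ a) * A $ a $ b * y $ b)"
    by (simp add: cinner_def matrix_vector_mult_def sum_distrib_left mult.assoc)
  also have "\<dots> = (\<Sum>b\<in>UNIV. \<Sum>a\<in>UNIV. cnj (x $ a) * A $ a $ b * y $ b)"
    by (rule sum.swap)
  also have "\<dots> = cinner (cadj A *v x) y"
    by (simp add: cinner_def matrix_vector_mult_def sum_distrib_left mult_ac)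
  finally show ?thesis .
qed

lemma inner_cinner: "x \<bullet> y = Re (cinner x (y::complex^'n))"
  by (simp add: inner_vec_def cinner_def inner_complex_def Re_sum)

lemma cinner_self_real: "cinner x x = complex_of_real ((norm x)^2)"
proof -
  have "Im (cinner x x) = 0" by (simp add: cinner_def Im_sum)
  moreover have "Re (cinner x x) = (norm x)^2"
    by (simp flip: inner_cinner add: power2_norm_eq_inner)
  ultimately show ?thesis by (simp add: complex_eq_iff)
qed

lemma cinner_self_eq0: "cinner x x = 0 \<longleftrightarrow> x = 0"
  by (simp add: cinner_self_real)

lemma herm_swap: "cadj B = B \<Longrightarrow> cinner v (B *v w) = cnj (cinner w (B *v v))"
  by (metis cinner_adj cinner_commute)

lemma quad_expand:
  assumes h: "cadj B = B"
  shows "Re (cinner (v + t *\<^sub>R w) (B *v (v + t *\<^sub>R w))) =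
     Re (cinner v (B *v v)) + 2 * t * Re (cinner w (B *v v)) + t^2 * Re (cinner w (B *v w))"
proof -
  have "cinner (v + t *\<^sub>R w) (B *v (v + t *\<^sub>R w)) =
     cinner v (B *v v) + of_real t * cinner v (B *v w) + of_real t * cinner w (B *v v) + of_real t * of_real t * cinner w (B *v w)"
    by (simp add: scaleR_smult matrix_vector_right_distrib vector_scalar_commute cinner_add_left
        cinner_add_right cinner_smult_left cinner_smult_right algebra_simps)
  moreover have "Re (cinner v (B *v w)) = Re (cinner w (B *v v))"
    using herm_swap[OF h, of v w] by simp
  ultimately show ?thesis by (simp add: power2_eq_square)
qed

lemma matvec_scaleR: "(A::complex^'n^'n) *v (t *\<^sub>R x) = t *\<^sub>R (A *v x)"
  by (simp add: scaleR_smult vector_scalar_commute)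

lemma herm_eigvec_in:
  fixes A :: "complex^'n^'n"
  assumes h: "cadj A = A" and W: "subspace W" and nz: "W \<noteq> {0}"
    and inv: "\<And>x. x \<in> W \<Longrightarrow> A *v x \<in> W"
  shows "\<exists>v c. v \<in> W \<and> norm v = 1 \<and> A *v v = complex_of_real c *s v"
proof -
  define q where "q x = Re (cinner x (A *v x))" for x
  define S where "S = W \<inter> sphere 0 1"
  have cS: "compact S" unfolding S_def
    using closed_subspace[OF W] compact_sphere by (simp add: closed_Int_compact)
  obtain x0 where x0: "x0 \<in> W" "x0 \<noteq> 0" using nz W subspace_0 by blast
  have "(1 / norm x0) *\<^sub>R x0 \<in> S" using x0 W by (simp add: S_def subspace_scale)
  hence ne: "S \<noteq> {}" by blast
  have cq: "continuous_on S q"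
    unfolding q_def cinner_def matrix_vector_mult_def
    by (intro continuous_intros)
  obtain v where v: "v \<in> S" and vmax: "\<And>y. y \<in> S \<Longrightarrow> q y \<le> q v"
    using continuous_attains_sup[OF cS ne cq] by blast
  define c where "c = q v"
  define B where "B = mat (complex_of_real c) - A"
  have hB: "cadj B = B" using h by (simp add: B_def cadj_diff vec_eq_iff mat_nth)
  define b where "b x = Re (cinner x (B *v x))" for x
  have bx: "b x = c * (norm x)^2 - q x" for x
  proof -
    have "B *v x = complex_of_real c *s x - A *v x"
      by (simp add: B_def matrix_vector_mult_diff_rdistrib mat_mult_vec)
    thus ?thesis by (simp add: b_def q_def cinner_diff_right cinner_smult_right cinner_self_real)
  qed
  have bnn: "b x \<ge> 0" if "x \<in> W" for x
  proof (cases "x = 0")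
    case True thus ?thesis by (simp add: b_def)
  next
    case False
    have xs: "(1 / norm x) *\<^sub>R x \<in> S" using that False W by (simp add: S_def subspace_scale)
    have "q ((1 / norm x) *\<^sub>R x) = q x / (norm x)^2"
      by (simp add: q_def scaleR_smult vector_scalar_commute cinner_smult_left cinner_smult_right power2_eq_square)
    with vmax[OF xs] have "q x / (norm x)^2 \<le> c" by (simp add: c_def)
    hence "q x \<le> c * (norm x)^2" using False by (simp add: divide_le_eq)
    thus ?thesis by (simp add: bx)
  qed
  have vW: "v \<in> W" and nv: "norm v = 1" using v by (auto simp: S_def)
  have b0: "b v = 0" by (simp add: bx nv c_def)
  have r0: "Re (cinner w (B *v v)) = 0" if w: "w \<in> W" for w
  proof (rule ccontr)
    assume r: "Re (cinner w (B *v v)) \<noteq> 0"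
    define rr where "rr = Re (cinner w (B *v v))"
    define s where "s = Re (cinner w (B *v w))"
    have s0: "s \<ge> 0" using bnn[OF w] by (simp add: s_def b_def)
    define t where "t = - rr / (s + 1)"
    have "v + t *\<^sub>R w \<in> W" using vW w W by (simp add: subspace_add subspace_scale)
    hence "0 \<le> b (v + t *\<^sub>R w)" by (rule bnn)
    also have "b (v + t *\<^sub>R w) = 2 * t * rr + t^2 * s"
      using quad_expand[OF hB, of v t w] b0 by (simp add: b_def rr_def s_def)
    also have "\<dots> = rr^2 * (- s - 2) / (s + 1)^2"
    proof -
      have ne: "s + 1 \<noteq> 0" using s0 by simp
      show ?thesis unfolding t_def using ne by (simp add: divide_simps power2_eq_square) (simp add: algebra_simps)
    qed
    finally have "0 \<le> rr^2 * (- s - 2) / (s + 1)^2" .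
    moreover have "rr^2 * (- s - 2) / (s + 1)^2 < 0"
      using s0 r by (intro divide_neg_pos mult_pos_neg) (auto simp: rr_def)
    ultimately show False by simp
  qed
  have BvW: "B *v v \<in> W"
  proof -
    have "B *v v = complex_of_real c *s v - A *v v"
      by (simp add: B_def matrix_vector_mult_diff_rdistrib mat_mult_vec)
    also have "\<dots> = c *\<^sub>R v - A *v v" by (simp add: scaleR_smult)
    finally show ?thesis using W vW inv by (simp add: subspace_diff subspace_scale)
  qed
  have "Re (cinner (B *v v) (B *v v)) = 0" using r0[OF BvW] .
  hence "B *v v = 0" by (simp add: cinner_self_real)
  hence "A *v v = complex_of_real c *s v"
    by (simp add: B_def matrix_vector_mult_diff_rdistrib mat_mult_vec)
  thus ?thesis using vW nv by blast
qed




lemma exists_orth: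
  fixes v :: "nat \<Rightarrow> complex^'n"
  assumes k: "k < CARD('n)"
  shows "\<exists>x. x \<noteq> 0 \<and> (\<forall>i<k. cinner (v i) x = 0)"
proof -
  define T where "T = v ` {..<k} \<union> (\<lambda>i. \<i> *s v i) ` {..<k}"
  have fT: "finite T" by (simp add: T_def)
  have cT: "card T \<le> 2 * k"
  proof -
    have "card T \<le> card (v ` {..<k}) + card ((\<lambda>i. \<i> *s v i) ` {..<k})"
      unfolding T_def by (rule card_Un_le)
    also have "\<dots> \<le> k + k" by (intro add_mono) (auto intro: order.trans[OF card_image_le])
    finally show ?thesis by simp
  qed
  have d1: "dim (span T) \<le> card T" by (rule dim_le_card[OF order.refl fT])
  define Orth where "Orth = {y \<in> UNIV. \<forall>x\<in>span T. orthogonal x y}"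
  have "dim Orth + dim (span T) = dim (UNIV :: (complex^'n) set)"
    unfolding Orth_def by (rule dim_subspace_orthogonal_to_vectors) (auto simp: subspace_span)
  hence "dim Orth + dim (span T) = 2 * CARD('n)" by (simp add: dim_UNIV)
  hence "dim Orth > 0" using d1 cT k by linarith
  hence "\<not> Orth \<subseteq> {0}" using dim_eq_0 by (metis less_irrefl)
  then obtain y where y: "y \<in> Orth" "y \<noteq> 0" by blast
  have "cinner (v i) y = 0" if i: "i < k" for i
  proof -
    have "v i \<in> span T" "\<i> *s v i \<in> span T" using i by (auto simp: T_def intro: span_base)
    hence "v i \<bullet> y = 0" "(\<i> *s v i) \<bullet> y = 0" using y by (auto simp: Orth_def orthogonal_def)
    hence "Re (cinner (v i) y) = 0" "Re (cinner (\<i> *s v i) y) = 0" by (simp_all add: inner_cinner)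
    thus ?thesis by (simp add: cinner_smult_left complex_eq_iff)
  qed
  thus ?thesis using y by blast
qed

lemma eig_family:
  fixes A :: "complex^'n^'n"
  assumes h: "cadj A = A"
  shows "k \<le> CARD('n) \<Longrightarrow> \<exists>v c. (\<forall>i<k. A *v v i = complex_of_real (c i) *s v i) \<and>
            (\<forall>i<k. \<forall>j<k. cinner (v i) (v j) = (if i = j then 1 else 0))"
proof (induction k)
  case 0 thus ?case by simp
next
  case (Suc k)
  then obtain v c where ev: "\<forall>i<k. A *v v i = complex_of_real (c i) *s v i"
    and on: "\<forall>i<k. \<forall>j<k. cinner (v i) (v j) = (if i = j then 1 else 0)" by auto
  define W where "W = {x. \<forall>i<k. cinner (v i) x = 0}"
  have sW: "subspace W"
    by (auto simp: subspace_def W_def cinner_add_right scaleR_smult cinner_smult_right)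
  have nz: "W \<noteq> {0}" using exists_orth[of k v] Suc.prems by (auto simp: W_def)
  have inv: "A *v x \<in> W" if "x \<in> W" for x
  proof -
    have "cinner (v i) (A *v x) = 0" if i: "i < k" for i
    proof -
      have "cinner (v i) (A *v x) = cinner (A *v v i) x" using h by (simp add: cinner_adj)
      also have "\<dots> = 0" using ev i \<open>x \<in> W\<close> by (simp add: cinner_smult_left W_def)
      finally show ?thesis .
    qed
    thus ?thesis by (simp add: W_def)
  qed
  obtain u d where u: "u \<in> W" "norm u = 1" "A *v u = complex_of_real d *s u"
    using herm_eigvec_in[OF h sW nz inv] by blast
  have uu: "cinner u u = 1" using u by (simp add: cinner_self_real)
  have vu: "cinner (v i) u = 0" "cinner u (v i) = 0" if "i < k" for i
    using u that by (auto simp: W_def cinner_commute[of u])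
  show ?case
    apply (rule exI[of _ "v(k := u)"], rule exI[of _ "c(k := d)"])
    using ev on u uu vu by (auto simp: less_Suc_eq)
qed

theorem spectral:
  fixes A :: "complex^'n^'n"
  assumes h: "cadj A = A"
  shows "\<exists>U l. unitary U \<and> A = U ** rdiag l ** cadj U"
proof -
  obtain v c where ev: "\<forall>i<CARD('n). A *v v i = complex_of_real (c i) *s v i"
    and on: "\<forall>i<CARD('n). \<forall>j<CARD('n). cinner (v i) (v j) = (if i = j then 1 else 0)"
    using eig_family[OF h order.refl] by blast
  obtain g :: "'n \<Rightarrow> nat" where g: "bij_betw g UNIV {0..<CARD('n)}"
    using ex_bij_betw_finite_nat[of "UNIV :: 'n set"] by auto
  have gl: "g j < CARD('n)" for j using g by (auto simp: bij_betw_def)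
  have gi: "g j = g k \<longleftrightarrow> j = k" for j k using g by (auto simp: bij_betw_def inj_def)
  define U :: "complex^'n^'n" where "U = (\<chi> a j. v (g j) $ a)"
  define l where "l j = c (g j)" for j
  have U1: "cadj U ** U = mat 1"
  proof -
    have "(cadj U ** U) $ j $ k = cinner (v (g j)) (v (g k))" for j k
      by (simp add: mmult_nth U_def cinner_def)
    thus ?thesis using on gl gi by (simp add: vec_eq_iff mat_nth)
  qed
  hence U2: "U ** cadj U = mat 1" by (simp add: matrix_left_right_inverse)
  have AU: "A ** U = U ** rdiag l"
  proof -
    have "(A ** U) $ a $ k = (A *v v (g k)) $ a" for a k
      by (simp add: mmult_nth U_def matrix_vector_mult_def)
    thus ?thesis using ev gl by (simp add: vec_eq_iff mult_rdiag_nth U_def l_def mult.commute)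
  qed
  have "A = A ** (U ** cadj U)" using U2 by simp
  also have "\<dots> = U ** rdiag l ** cadj U" by (simp add: matrix_mul_assoc AU)
  finally show ?thesis using U1 U2 by (auto simp: unitary_def)
qed




lemma cinner_axis: "cinner (axis i 1) (H *v axis j 1) = (H::complex^'n^'n) $ i $ j"
  by (simp add: cinner_def matrix_vector_mult_def axis_def if_distrib if_distribR cong: if_cong)

lemma form_zero:
  fixes H :: "complex^'n^'n"
  assumes z: "\<And>x. cinner x (H *v x) = 0"
  shows "H = 0"
proof -
  have ex: "cinner (axis i 1 + c *s axis j 1) (H *v (axis i 1 + c *s axis j 1)) =
      H $ i $ i + c * H $ i $ j + cnj c * H $ j $ i + cnj c * c * H $ j $ j" for i j c
    by (simp add: matrix_vector_right_distrib vector_scalar_commute cinner_add_left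
        cinner_add_right cinner_smult_left cinner_smult_right cinner_axis algebra_simps)
  have d: "H $ i $ i = 0" for i using z[of "axis i 1"] by (simp add: cinner_axis)
  have "H $ i $ j = 0" for i j
  proof -
    have "H $ i $ j + H $ j $ i = 0" using ex[of i 1 j] z d by simp
    moreover have "\<i> * H $ i $ j - \<i> * H $ j $ i = 0" using ex[of i \<i> j] z d by simp
    ultimately show ?thesis by (simp add: algebra_simps)
  qed
  thus ?thesis by (simp add: vec_eq_iff)
qed

lemma cinner_cadj_self: "cinner x (cadj A *v x) = cnj (cinner x (A *v x))"
  by (metis cadj_cadj cinner_adj cinner_commute)

lemma form_real_herm:
  fixes A :: "complex^'n^'n"
  assumes r: "\<And>x. cinner x (A *v x) \<in> \<real>"
  shows "cadj A = A"
proof -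
  have "cinner x ((A - cadj A) *v x) = 0" for x
    using r[of x] by (simp add: matrix_vector_mult_diff_rdistrib cinner_diff_right cinner_cadj_self
        Reals_cnj_iff)
  hence "A - cadj A = 0" by (rule form_zero)
  thus ?thesis by simp
qed

lemma posdef_herm: "posdef A \<Longrightarrow> cadj A = A"
  unfolding posdef_def sform_cinner
  by (rule form_real_herm) (metis cinner_zero_left Reals_0)

lemma herm_form_real: "cadj A = A \<Longrightarrow> cinner x (A *v x) \<in> \<real>"
  by (metis Reals_cnj_iff cinner_cadj_self)

lemma axis_ne0: "axis k (1::complex) \<noteq> 0"
  by (simp add: vec_eq_iff axis_def) 

lemma posdef_eig_pos:
  assumes p: "posdef A" and u: "unitary U" and A: "A = U ** rdiag l ** cadj U"
  shows "l k > 0"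
proof -
  define x where "x = U *v axis k 1"
  have ux: "cadj U *v x = axis k 1"
    using u by (simp add: x_def matrix_vector_mul_assoc unitary_def)
  have "x \<noteq> 0" using ux axis_ne0[of k] by auto
  hence "0 < Re (cinner x (A *v x))" using p by (simp add: posdef_def sform_cinner)
  also have "cinner x (A *v x) = cinner (axis k 1) (rdiag l *v axis k 1)"
    by (simp add: A ux cinner_adj flip: matrix_vector_mul_assoc)
  also have "\<dots> = l k" by (simp add: cinner_axis)
  finally show ?thesis by simp
qed

lemma form_bound:
  fixes H :: "complex^'n^'n"
  shows "norm (cinner x (H *v x)) \<le> (\<Sum>a\<in>UNIV. \<Sum>b\<in>UNIV. norm (H $ a $ b)) * (norm x)^2"
proof -
  have "norm (cinner x (H *v x)) = norm (\<Sum>a\<in>UNIV. \<Sum>b\<in>UNIV. cnj (x $ a) * H $ a $ b * x $ b)"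
    by (simp add: cinner_def matrix_vector_mult_def sum_distrib_left mult.assoc)
  also have "\<dots> \<le> (\<Sum>a\<in>UNIV. \<Sum>b\<in>UNIV. norm (cnj (x $ a) * H $ a $ b * x $ b))"
    by (rule order.trans[OF norm_sum sum_mono]) (rule norm_sum)
  also have "\<dots> \<le> (\<Sum>a\<in>UNIV. \<Sum>b\<in>UNIV. norm (H $ a $ b) * (norm x)^2)"
  proof (intro sum_mono)
    fix a b
    have "norm (x $ a) * norm (x $ b) \<le> norm x * norm x"
      by (intro mult_mono Finite_Cartesian_Product.norm_nth_le) auto
    hence "(norm (x $ a) * norm (x $ b)) * norm (H $ a $ b) \<le> (norm x * norm x) * norm (H $ a $ b)"
      by (rule mult_right_mono) simp
    thus "norm (cnj (x $ a) * H $ a $ b * x $ b) \<le> norm (H $ a $ b) * (norm x)^2"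
      by (simp add: norm_mult power2_eq_square mult_ac)
  qed
  also have "\<dots> = (\<Sum>a\<in>UNIV. \<Sum>b\<in>UNIV. norm (H $ a $ b)) * (norm x)^2"
    by (simp add: sum_distrib_right)
  finally show ?thesis .
qed

lemma posdef_shift:
  fixes H :: "complex^'n^'n"
  assumes h: "cadj H = H"
  defines "c \<equiv> (\<Sum>a\<in>UNIV. \<Sum>b\<in>UNIV. norm (H $ a $ b)) + 1"
  shows "posdef (H + mat (complex_of_real c))"
  unfolding posdef_def sform_cinner
proof (intro allI impI conjI)
  fix x :: "complex^'n" assume x: "x \<noteq> 0"
  have eq: "cinner x ((H + mat (complex_of_real c)) *v x) = cinner x (H *v x) + c * (norm x)^2"
    by (simp add: matrix_vector_mult_add_rdistrib mat_mult_vec cinner_add_right cinner_smult_right cinner_self_real)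
  show "cinner x ((H + mat (complex_of_real c)) *v x) \<in> \<real>"
    unfolding eq using herm_form_real[OF h] by (simp add: Reals_add)
  have "Re (cinner x (H *v x)) \<ge> - (norm (cinner x (H *v x)))"
    using abs_Re_le_cmod[of "cinner x (H *v x)"] by linarith
  moreover have "norm (cinner x (H *v x)) \<le> c * (norm x)^2 - (norm x)^2"
    using form_bound[of x H] by (simp add: c_def algebra_simps)
  moreover have "(norm x)^2 > 0" using x by simp
  ultimately have "0 < Re (cinner x (H *v x)) + c * (norm x)^2" by linarith
  thus "0 < Re (cinner x ((H + mat (complex_of_real c)) *v x))"
    unfolding eq by simp
qed

lemma posdef_scal: "c > 0 \<Longrightarrow> posdef (mat (complex_of_real c) :: complex^'n^'n)"
  by (simp add: posdef_def sform_cinner mat_mult_vec cinner_smult_right cinner_self_real)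




lemma cscaleM_0[simp]: "cscaleM 0 X = 0" by (simp add: vec_eq_iff)

definition Eu :: "'n \<Rightarrow> 'n \<Rightarrow> complex^'n^'n" where
  "Eu j i = (\<chi> a b. if a = j then (if b = i then 1 else 0) else 0)"

definition Nd :: "(complex^'n^'n \<Rightarrow> complex^'m^'m) \<Rightarrow> complex^'m^'m \<Rightarrow> complex^'n^'n" where
  "Nd N Y = (\<chi> i j. trace (Y ** N (Eu j i)))"

lemma sum_delta_r: "(\<Sum>k\<in>UNIV. f k * (if k = j then c else 0)) = f (j::'n::finite) * (c::complex)"
proof -
  have "(\<Sum>k\<in>UNIV. f k * (if k = j then c else 0)) = (\<Sum>k\<in>UNIV. if k = j then f k * c else 0)"
    by (rule sum.cong) auto
  also have "\<dots> = f j * c" by (subst sum.delta) auto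
  finally show ?thesis .
qed

lemma sum_delta_r': "(\<Sum>k\<in>UNIV. f k * (if j = k then c else 0)) = f (j::'n::finite) * (c::complex)"
  using sum_delta_r[of f j c] by (simp add: eq_commute)

lemma Eu_nth: "Eu j i $ a $ b = (if a = j then 1 else 0) * (if b = i then 1 else 0)"
  by (simp add: Eu_def)

lemma trace_Eu: "trace (M ** Eu j i) = M $ i $ j"
proof -
  have "trace (M ** Eu j i) = (\<Sum>a\<in>UNIV. (\<Sum>k\<in>UNIV. M $ a $ k * (if k = j then 1 else 0)) * (if a = i then 1 else 0))"
    unfolding trace_def mmult_nth Eu_nth by (simp add: sum_distrib_right mult.assoc)
  also have "\<dots> = M $ i $ j" by (simp only: sum_delta_r) simp
  finally show ?thesis .
qed

lemma trace_unique:
  assumes "\<And>X. trace (M1 ** X) = trace (M2 ** (X::complex^'n^'n))"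
  shows "M1 = M2"
  using assms[of "Eu _ _"] by (simp add: vec_eq_iff trace_Eu)

lemma matrix_expand: "X = (\<Sum>j\<in>UNIV. \<Sum>i\<in>UNIV. cscaleM (X $ j $ i) (Eu j i))"
proof -
  have "(\<Sum>j\<in>UNIV. \<Sum>i\<in>UNIV. cscaleM (X $ j $ i) (Eu j i)) $ a $ b = X $ a $ b" for a b
  proof -
    have "(\<Sum>j\<in>UNIV. \<Sum>i\<in>UNIV. cscaleM (X $ j $ i) (Eu j i)) $ a $ b =
      (\<Sum>j\<in>UNIV. (\<Sum>i\<in>UNIV. X $ j $ i * (if b = i then 1 else 0)) * (if a = j then 1 else 0))"
      unfolding sum_component cscaleM_nth Eu_nth by (rule sum.cong[OF refl]) (simp add: sum_distrib_right mult_ac)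
    also have "\<dots> = X $ a $ b" by (simp only: sum_delta_r') simp
    finally show ?thesis .
  qed
  thus ?thesis by (simp add: vec_eq_iff)
qed

lemma trace_mult_sum: "trace (Y ** (\<Sum>s\<in>S. f s)) = (\<Sum>s\<in>S. trace (Y ** f s))"
proof -
  have "trace (Y ** (\<Sum>s\<in>S. f s)) = (\<Sum>a\<in>UNIV. \<Sum>b\<in>UNIV. \<Sum>s\<in>S. Y $ a $ b * f s $ b $ a)"
    by (simp add: trace_def mmult_nth sum_component sum_distrib_left)
  also have "\<dots> = (\<Sum>a\<in>UNIV. \<Sum>s\<in>S. \<Sum>b\<in>UNIV. Y $ a $ b * f s $ b $ a)"
    by (rule sum.cong[OF refl], rule sum.swap)
  also have "\<dots> = (\<Sum>s\<in>S. \<Sum>a\<in>UNIV. \<Sum>b\<in>UNIV. Y $ a $ b * f s $ b $ a)"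
    by (rule sum.swap)
  also have "\<dots> = (\<Sum>s\<in>S. trace (Y ** f s))"
    by (simp add: trace_def mmult_nth)
  finally show ?thesis .
qed

lemma trace_mult_scale: "trace (Y ** cscaleM c Z) = c * trace (Y ** Z)"
  by (simp add: trace_def mmult_nth sum_distrib_left mult_ac)

context
  fixes N :: "complex^'n^'n \<Rightarrow> complex^'m^'m"
  assumes lin: "clinear_map N"
begin

lemma N_add: "N (X + Y) = N X + N Y" using lin by (simp add: clinear_map_def)
lemma N_scale: "N (cscaleM c X) = cscaleM c (N X)" using lin by (simp add: clinear_map_def)
lemma N_zero: "N 0 = 0"
  by (metis N_scale cscaleM_0)
lemma N_diff: "N (X - Y) = N X - N Y"
  using N_add[of "X - Y" Y] by (simp add: algebra_simps)
lemma N_sum: "finite S \<Longrightarrow> N (\<Sum>s\<in>S. f s) = (\<Sum>s\<in>S. N (f s))"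
  by (induction S rule: finite_induct) (simp_all add: N_zero N_add)

lemma Nd_adj: "trace (Y ** N X) = trace (Nd N Y ** X)"
proof -
  have "trace (Y ** N X) = trace (Y ** N (\<Sum>j\<in>UNIV. \<Sum>i\<in>UNIV. cscaleM (X $ j $ i) (Eu j i)))"
    by (rule arg_cong[where f = "\<lambda>Z. trace (Y ** N Z)"]) (rule matrix_expand)
  also have "\<dots> = (\<Sum>j\<in>UNIV. \<Sum>i\<in>UNIV. X $ j $ i * trace (Y ** N (Eu j i)))"
    by (simp add: N_sum N_scale trace_mult_sum trace_mult_scale)
  also have "\<dots> = trace (Nd N Y ** X)"
    by (simp add: trace_def mmult_nth Nd_def mult.commute) (rule sum.swap)
  finally show ?thesis .
qed

lemma madjoint_eq: "madjoint N = Nd N"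
proof -
  have "\<forall>X Y. trace (Y ** N X) = trace (madjoint N Y ** X)"
    unfolding madjoint_def by (rule someI[of _ "Nd N"]) (simp add: Nd_adj)
  thus ?thesis
    by (intro ext trace_unique) (metis Nd_adj)
qed

end

lemma Nd_add: fixes N :: "complex^'n^'n \<Rightarrow> complex^'m^'m" shows "Nd N (Y1 + Y2) = Nd N Y1 + Nd N Y2"
proof -
  have "trace ((Y1 + Y2) ** Z) = trace (Y1 ** Z) + trace (Y2 ** Z)" for Z :: "complex^'m^'m"
    by (simp add: trace_def mmult_nth sum.distrib distrib_right)
  thus ?thesis by (simp add: Nd_def vec_eq_iff)
qed

lemma Nd_scaleR: fixes N :: "complex^'n^'n \<Rightarrow> complex^'m^'m" shows "Nd N (r *\<^sub>R Y) = r *\<^sub>R Nd N Y"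
proof -
  have "trace ((r *\<^sub>R Y) ** Z) = r *\<^sub>R trace ((Y::complex^'m^'m) ** Z)" for Z :: "complex^'m^'m"
    by (simp add: trace_def mmult_nth scaleR_sum_right)
  thus ?thesis by (simp add: Nd_def vec_eq_iff)
qed

lemma Nd_bounded_linear: "bounded_linear (Nd N)"
  unfolding linear_conv_bounded_linear[symmetric]
  by (rule linearI) (simp_all add: Nd_add Nd_scaleR)




lemma cadj_cscaleM: "cadj (cscaleM c X) = cscaleM (cnj c) (cadj X)"
  by (simp add: vec_eq_iff)

lemma cadj_Eu: "cadj (Eu i j) = (Eu j i :: complex^'n^'n)"
  by (simp add: vec_eq_iff Eu_def)

lemma cnj_trace: "cnj (trace A) = trace (cadj (A::complex^'n^'n))"
  by (simp add: trace_def)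

context
  fixes N :: "complex^'n^'n \<Rightarrow> complex^'m^'m"
  assumes lin: "clinear_map N" and sp: "strictly_positive N"
begin

lemma N_herm:
  assumes h: "cadj H = H"
  shows "cadj (N H) = N H"
proof -
  define c where "c = (\<Sum>a\<in>UNIV. \<Sum>b\<in>UNIV. norm (H $ a $ b)) + 1"
  have c: "c > 0" unfolding c_def by (simp add: add_nonneg_pos sum_nonneg)
  have "N H = N (H + mat (complex_of_real c)) - N (mat (complex_of_real c))"
    by (metis N_diff[OF lin] add_diff_cancel_right')
  moreover have "cadj (N (H + mat (complex_of_real c))) = N (H + mat (complex_of_real c))"
    using sp posdef_shift[OF h] unfolding c_def strictly_positive_def by (blast intro: posdef_herm)
  moreover have "cadj (N (mat (complex_of_real c))) = N (mat (complex_of_real c))"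
    using sp posdef_scal[OF c] unfolding strictly_positive_def by (blast intro: posdef_herm)
  ultimately show ?thesis by (simp add: cadj_diff)
qed

lemma N_cadj: "N (cadj X) = cadj (N X)"
proof -
  define H1 where "H1 = cscaleM (1/2) (X + cadj X)"
  define H2 where "H2 = cscaleM (-\<i>/2) (X - cadj X)"
  have h1: "cadj H1 = H1" by (simp add: H1_def vec_eq_iff add.commute)
  have h2: "cadj H2 = H2" by (simp add: H2_def vec_eq_iff right_diff_distrib)
  have x: "X = H1 + cscaleM \<i> H2" by (simp add: H1_def H2_def vec_eq_iff algebra_simps)
  have xa: "cadj X = H1 + cscaleM (-\<i>) H2" by (simp add: H1_def H2_def vec_eq_iff algebra_simps)
  have "cadj (N X) = cadj (N H1) + cscaleM (-\<i>) (cadj (N H2))"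
    by (subst x) (simp add: N_add[OF lin] N_scale[OF lin] cadj_add cadj_cscaleM)
  also have "\<dots> = N (cadj X)"
    by (simp add: xa N_add[OF lin] N_scale[OF lin] N_herm h1 h2)
  finally show ?thesis by (rule sym)
qed

lemma Nd_herm:
  assumes h: "cadj Y = Y"
  shows "cadj (Nd N Y) = Nd N Y"
proof -
  have "cnj (trace (Y ** N (Eu i j))) = trace (Y ** N (Eu j i))" for i j
  proof -
    have "cnj (trace (Y ** N (Eu i j))) = trace (cadj (N (Eu i j)) ** cadj Y)"
      by (simp only: cnj_trace cadj_mult)
    also have "\<dots> = trace (N (Eu j i) ** Y)"
      by (simp only: N_cadj[symmetric] cadj_Eu h)
    also have "\<dots> = trace (Y ** N (Eu j i))" by (rule trace_mul_sym)
    finally show ?thesis .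
  qed
  thus ?thesis by (simp add: vec_eq_iff Nd_def)
qed

end

lemma Nd_one:
  assumes lin: "clinear_map N" and tp: "trace_preserving N"
  shows "Nd N (mat 1) = mat 1"
proof (rule trace_unique)
  fix X
  show "trace (Nd N (mat 1) ** X) = trace (mat 1 ** X)"
  proof -
    have "trace (Nd N (mat 1) ** X) = trace (mat 1 ** N X)" by (rule Nd_adj[OF lin, symmetric])
    also have "\<dots> = trace X" using tp by (simp add: trace_preserving_def)
    finally show ?thesis by simp
  qed
qed




lemma norm_le_sum_cart: "norm (x::'a::real_normed_vector^'n) \<le> (\<Sum>i\<in>UNIV. norm (x $ i))"
  unfolding norm_vec_def by (rule L2_set_le_sum) simp

lemma norm_entry: "norm (A $ i $ j) \<le> norm (A::'a::real_normed_vector^'n^'m)"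
  by (rule order.trans[OF Finite_Cartesian_Product.norm_nth_le Finite_Cartesian_Product.norm_nth_le])

lemma norm_le_entries: "norm (A::'a::real_normed_vector^'n^'m) \<le> (\<Sum>i\<in>UNIV. \<Sum>j\<in>UNIV. norm (A $ i $ j))"
  by (rule order.trans[OF norm_le_sum_cart sum_mono[OF norm_le_sum_cart]])

lemma norm_le_entries_bound:
  assumes "\<And>i j. norm (A $ i $ j) \<le> M"
  shows "norm (A::'a::real_normed_vector^'n^'m) \<le> real CARD('m) * real CARD('n) * M"
proof -
  have "(\<Sum>i\<in>UNIV. \<Sum>j\<in>UNIV. norm (A $ i $ j)) \<le> (\<Sum>i\<in>(UNIV::'m set). \<Sum>j\<in>(UNIV::'n set). M)"
    by (intro sum_mono assms)
  hence "norm A \<le> (\<Sum>i\<in>(UNIV::'m set). \<Sum>j\<in>(UNIV::'n set). M)"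
    using norm_le_entries[of A] by linarith
  thus ?thesis by simp
qed

lemma mmult_add_left: "(A + B) ** C = A ** C + B ** (C::complex^'p^'k)"
  by (simp add: vec_eq_iff mmult_nth sum.distrib distrib_right)
lemma mmult_add_right: "C ** (A + B) = C ** A + (C::complex^'k^'n) ** (B::complex^'p^'k)"
  by (simp add: vec_eq_iff mmult_nth sum.distrib distrib_left)
lemma mmult_diff_left: "(A - B) ** C = A ** C - B ** (C::complex^'p^'k)"
  by (simp add: vec_eq_iff mmult_nth sum_subtractf left_diff_distrib)
lemma mmult_diff_right: "C ** (A - B) = C ** A - (C::complex^'k^'n) ** (B::complex^'p^'k)"
  by (simp add: vec_eq_iff mmult_nth sum_subtractf right_diff_distrib)

lemma mmult_scaleR_left: "(r *\<^sub>R A) ** B = r *\<^sub>R (A ** (B::complex^'p^'k))"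
  by (simp add: vec_eq_iff mmult_nth scaleR_sum_right)
lemma mmult_scaleR_right: "A ** (r *\<^sub>R B) = r *\<^sub>R ((A::complex^'k^'n) ** (B::complex^'p^'k))"
  by (simp add: vec_eq_iff mmult_nth scaleR_sum_right)

lemma bb_mult: "bounded_bilinear (\<lambda>(A::complex^'k^'n) (B::complex^'p^'k). A ** B)"
proof (rule bounded_bilinear.intro)
  show "\<exists>K. \<forall>A B. norm ((A::complex^'k^'n) ** (B::complex^'p^'k)) \<le> norm A * norm B * K"
  proof (intro exI allI)
    fix A :: "complex^'k^'n" and B :: "complex^'p^'k"
    have "norm ((A ** B) $ i $ j) \<le> real CARD('k) * (norm A * norm B)" for i j
    proof -
      have "norm ((A ** B) $ i $ j) \<le> (\<Sum>k\<in>UNIV. norm (A $ i $ k * B $ k $ j))"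
        unfolding mmult_nth by (rule norm_sum)
      also have "\<dots> \<le> (\<Sum>k\<in>(UNIV::'k set). norm A * norm B)"
        by (intro sum_mono) (simp add: norm_mult mult_mono norm_entry)
      finally show ?thesis by simp
    qed
    hence "norm (A ** B) \<le> real CARD('n) * real CARD('p) * (real CARD('k) * (norm A * norm B))"
      by (rule norm_le_entries_bound)
    thus "norm (A ** B) \<le> norm A * norm B * (real CARD('n) * real CARD('p) * real CARD('k))"
      by (simp add: mult_ac)
  qed
qed (simp_all add: mmult_add_left mmult_add_right mmult_scaleR_left mmult_scaleR_right)

lemma tendsto_mmult:
  "(f \<longlongrightarrow> a) F \<Longrightarrow> (g \<longlongrightarrow> b) F \<Longrightarrow> ((\<lambda>x. (f x::complex^'k^'n) ** (g x::complex^'p^'k)) \<longlongrightarrow> a ** b) F"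
  by (rule bounded_bilinear.tendsto[OF bb_mult])

lemma tendsto_rdiag:
  assumes "\<And>k. ((\<lambda>x. d x k) \<longlongrightarrow> d0 k) F"
  shows "((\<lambda>x. rdiag (d x)) \<longlongrightarrow> rdiag d0) F"
  unfolding rdiag_def by (intro tendsto_vec_lambda) (auto intro!: tendsto_intros assms)

definition dq :: "(real \<Rightarrow> 'a::real_normed_vector) \<Rightarrow> 'a \<Rightarrow> 'a \<Rightarrow> bool" where
  "dq F F0 D \<longleftrightarrow> ((\<lambda>p. (1/p) *\<^sub>R (F p - F0)) \<longlongrightarrow> D) (at 0)"

lemma dq_cont:
  assumes "dq F F0 D"
  shows "(F \<longlongrightarrow> F0) (at 0)"
proof -
  have "((\<lambda>p. F0 + p *\<^sub>R ((1/p) *\<^sub>R (F p - F0))) \<longlongrightarrow> F0 + 0 *\<^sub>R D) (at 0)"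
    using assms unfolding dq_def by (intro tendsto_intros) (auto intro: tendsto_ident_at)
  moreover have "eventually (\<lambda>p. F0 + p *\<^sub>R ((1/p) *\<^sub>R (F p - F0)) = F p) (at 0)"
    by (auto simp: eventually_at_filter)
  ultimately show ?thesis by (simp add: tendsto_cong)
qed

lemma dq_mult:
  fixes F :: "real \<Rightarrow> complex^'k^'n" and G :: "real \<Rightarrow> complex^'p^'k"
  assumes f: "dq F F0 D" and g: "dq G G0 E"
  shows "dq (\<lambda>p. F p ** G p) (F0 ** G0) (D ** G0 + F0 ** E)"
proof -
  have "((\<lambda>p. ((1/p) *\<^sub>R (F p - F0)) ** G p + F0 ** ((1/p) *\<^sub>R (G p - G0))) \<longlongrightarrow> D ** G0 + F0 ** E) (at 0)"
    using f g dq_cont[OF g] unfolding dq_def by (intro tendsto_intros tendsto_mmult)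
  moreover have "((1/p) *\<^sub>R (F p - F0)) ** G p + F0 ** ((1/p) *\<^sub>R (G p - G0)) = (1/p) *\<^sub>R (F p ** G p - F0 ** G0)" for p
    by (simp add: mmult_scaleR_left mmult_scaleR_right mmult_diff_left mmult_diff_right
        scaleR_diff_right)
  ultimately show ?thesis unfolding dq_def by simp
qed

lemma dq_linear:
  assumes g: "bounded_linear g" and f: "dq F F0 D"
  shows "dq (\<lambda>p. g (F p)) (g F0) (g D)"
proof -
  have "((\<lambda>p. g ((1/p) *\<^sub>R (F p - F0))) \<longlongrightarrow> g D) (at 0)"
    using f unfolding dq_def by (rule bounded_linear.tendsto[OF g])
  thus ?thesis unfolding dq_def by (simp add: linear.scaleR[OF bounded_linear.linear[OF g]] linear_diff[OF bounded_linear.linear[OF g]])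
qed




lemma posdef_decomp:
  assumes "posdef A"
  shows "\<exists>U l. unitary U \<and> A = U ** rdiag l ** cadj U \<and> (\<forall>k. l k > 0)"
proof -
  obtain U l where "unitary U" "A = U ** rdiag l ** cadj U"
    using spectral[OF posdef_herm[OF assms]] by blast
  thus ?thesis using posdef_eig_pos[OF assms] by blast
qed

lemma mpow_decomp: "unitary U \<Longrightarrow> A = U ** rdiag l ** cadj U \<Longrightarrow>
   mpow A t = U ** rdiag (\<lambda>k. l k powr t) ** cadj U"
  unfolding mpow_def by (drule mfun_eq) (auto simp: o_def)

lemma mlog_decomp: "unitary U \<Longrightarrow> A = U ** rdiag l ** cadj U \<Longrightarrow>
   mlog A = U ** rdiag (\<lambda>k. ln (l k)) ** cadj U"
  unfolding mlog_def by (drule mfun_eq) (auto simp: o_def)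

lemma mexp_decomp: "unitary U \<Longrightarrow> A = U ** rdiag l ** cadj U \<Longrightarrow>
   mexp A = U ** rdiag (\<lambda>k. exp (l k)) ** cadj U"
  unfolding mexp_def by (drule mfun_eq) (auto simp: o_def)

lemma conj_diff: "U ** rdiag a ** cadj U - U ** rdiag b ** cadj U = U ** rdiag (\<lambda>k. a k - b k) ** cadj U"
  by (simp add: rdiag_diff[symmetric] mmult_diff_left mmult_diff_right)

lemma conj_add: "U ** rdiag a ** cadj U + U ** rdiag b ** cadj U = U ** rdiag (\<lambda>k. a k + b k) ** cadj U"
  by (simp add: rdiag_add[symmetric] mmult_add_left mmult_add_right)

lemma conj_scaleR: "r *\<^sub>R (U ** rdiag a ** cadj U) = U ** rdiag (\<lambda>k. r * a k) ** cadj U"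
  by (simp add: rdiag_scaleR[symmetric] mmult_scaleR_left mmult_scaleR_right)

lemma conj_tendsto:
  assumes "\<And>k. ((\<lambda>x. d x k) \<longlongrightarrow> d0 k) F"
  shows "((\<lambda>x. U ** rdiag (d x) ** cadj U) \<longlongrightarrow> U ** rdiag d0 ** cadj U) F"
  by (intro tendsto_mmult tendsto_const tendsto_rdiag assms)

lemma powr_dq:
  assumes l: "(l::real) > 0"
  shows "((\<lambda>p. (l powr (c * p) - 1) / p) \<longlongrightarrow> c * ln l) (at 0)"
proof -
  have eq: "l powr (c * p) = exp (p * (c * ln l))" for p using l by (simp add: powr_def mult_ac)
  have "((\<lambda>p. exp (p * (c * ln l))) has_real_derivative exp (0 * (c * ln l)) * (c * ln l)) (at 0)"
    by (auto intro!: derivative_eq_intros)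
  hence "((\<lambda>y. (exp (y * (c * ln l)) - exp (0 * (c * ln l))) / (y - 0)) \<longlongrightarrow> c * ln l) (at 0)"
    by (simp add: has_field_derivative_iff)
  thus ?thesis by (simp add: eq)
qed

lemma dq_mpow:
  assumes "posdef A"
  shows "dq (\<lambda>p. mpow A (c * p)) (mat 1) (c *\<^sub>R mlog A)"
proof -
  obtain U l where u: "unitary U" and A: "A = U ** rdiag l ** cadj U" and l: "\<And>k. l k > 0"
    using posdef_decomp[OF assms] by blast
  have "(1/p) *\<^sub>R (mpow A (c * p) - mat 1) = U ** rdiag (\<lambda>k. (l k powr (c * p) - 1) / p) ** cadj U" for p
    using mpow_decomp[OF u A] conj_unitary_one[OF u, symmetric]
    by (simp add: conj_diff conj_scaleR)
  moreover have "c *\<^sub>R mlog A = U ** rdiag (\<lambda>k. c * ln (l k)) ** cadj U"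
    by (simp add: mlog_decomp[OF u A] conj_scaleR)
  moreover have "((\<lambda>p. U ** rdiag (\<lambda>k. (l k powr (c * p) - 1) / p) ** cadj U) \<longlongrightarrow>
      U ** rdiag (\<lambda>k. c * ln (l k)) ** cadj U) (at 0)"
    by (intro conj_tendsto powr_dq l)
  ultimately show ?thesis unfolding dq_def by simp
qed

lemma mpow_herm: "posdef A \<Longrightarrow> cadj (mpow A t) = mpow A t"
  by (metis posdef_decomp mpow_decomp conj_hermitian)

lemma mlog_herm: "posdef A \<Longrightarrow> cadj (mlog A) = mlog A"
  by (metis posdef_decomp mlog_decomp conj_hermitian)

lemma mpow_zero: "posdef A \<Longrightarrow> mpow A 0 = mat 1"
proof -
  assume "posdef A"
  then obtain U l where u: "unitary U" and A: "A = U ** rdiag l ** cadj U" and l: "\<And>k. l k > 0"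
    using posdef_decomp by blast
  have "(\<lambda>k. l k powr 0) = (\<lambda>k. 1)" using l by (simp add: less_imp_neq[symmetric])
  thus ?thesis using mpow_decomp[OF u A, of 0] conj_unitary_one[OF u] by simp
qed




lemma unitary_entry:
  assumes u: "unitary V"
  shows "norm (V $ a $ k) \<le> 1"
proof -
  have "(cadj V ** V) $ k $ k = 1" using u by (simp add: unitary_def mat_nth)
  hence "(\<Sum>b\<in>UNIV. cnj (V $ b $ k) * V $ b $ k) = 1" by (simp add: mmult_nth)
  moreover have e: "cnj z * z = complex_of_real ((norm z)^2)" for z :: complex
    by (subst complex_norm_square) (rule mult.commute)
  ultimately have "(\<Sum>b\<in>UNIV. complex_of_real ((norm (V $ b $ k))^2)) = 1"
    by (simp only: e)
  hence "(\<Sum>b\<in>UNIV. (norm (V $ b $ k))^2) = 1"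
    by (metis of_real_eq_1_iff of_real_sum)
  moreover have "(norm (V $ a $ k))^2 \<le> (\<Sum>b\<in>UNIV. (norm (V $ b $ k))^2)"
    by (rule member_le_sum) auto
  ultimately have "(norm (V $ a $ k))^2 \<le> 1" by simp
  thus ?thesis by (simp add: power_le_one_iff)
qed

lemma conj_entry: "(V ** rdiag d ** cadj V) $ a $ b = (\<Sum>k\<in>UNIV. V $ a $ k * d k * cnj (V $ b $ k))"
  by (simp only: mmult_nth[of "V ** rdiag d" "cadj V"] mult_rdiag_nth cadj_nth)

lemma conj_bound:
  fixes V :: "complex^'n^'n"
  assumes u: "unitary V" and d: "\<And>k. \<bar>d k\<bar> \<le> M"
  shows "norm (V ** rdiag d ** cadj V) \<le> real CARD('n) * real CARD('n) * (real CARD('n) * M)"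
proof (rule norm_le_entries_bound)
  fix a b
  have "norm ((V ** rdiag d ** cadj V) $ a $ b) \<le> (\<Sum>k\<in>UNIV. norm (V $ a $ k * d k * cnj (V $ b $ k)))"
    unfolding conj_entry by (rule norm_sum)
  also have "\<dots> \<le> (\<Sum>k\<in>(UNIV::'n set). M)"
  proof (rule sum_mono)
    fix k
    have "norm (V $ a $ k) * \<bar>d k\<bar> * norm (V $ b $ k) \<le> 1 * M * 1"
      by (intro mult_mono unitary_entry[OF u] d) (auto intro: order.trans[OF abs_ge_zero d])
    thus "norm (V $ a $ k * d k * cnj (V $ b $ k)) \<le> M" by (simp add: norm_mult)
  qed
  finally show "norm ((V ** rdiag d ** cadj V) $ a $ b) \<le> real CARD('n) * M" by simp
qed

lemma cadj_conj_entry: "(cadj V ** W ** V) $ k $ k = (\<Sum>b\<in>UNIV. (\<Sum>a\<in>UNIV. cnj (V $ a $ k) * W $ a $ b) * V $ b $ k)"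
  by (simp add: mmult_nth)

lemma eig_bound:
  fixes V :: "complex^'n^'n"
  assumes u: "unitary V" and Z: "Z = V ** rdiag \<mu> ** cadj V"
  shows "\<bar>\<mu> k - c\<bar> \<le> real CARD('n) * real CARD('n) * norm (Z - c *\<^sub>R mat 1)"
proof -
  define W where "W = Z - c *\<^sub>R mat 1"
  have "c *\<^sub>R mat 1 = V ** rdiag (\<lambda>k. c * 1) ** cadj V"
    using conj_scaleR[of c V "\<lambda>k. 1"] conj_unitary_one[OF u] by simp
  hence "W = V ** rdiag (\<lambda>k. \<mu> k - c) ** cadj V"
    by (simp add: W_def Z conj_diff)
  hence "cadj V ** W ** V = (cadj V ** V) ** rdiag (\<lambda>k. \<mu> k - c) ** (cadj V ** V)"
    by (simp only: matrix_mul_assoc)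
  hence "cadj V ** W ** V = rdiag (\<lambda>k. \<mu> k - c)"
    using u by (simp add: unitary_def)
  hence "(cadj V ** W ** V) $ k $ k = complex_of_real (\<mu> k - c)" by simp
  hence "complex_of_real (\<mu> k - c) = (\<Sum>b\<in>UNIV. \<Sum>a\<in>UNIV. cnj (V $ a $ k) * W $ a $ b * V $ b $ k)"
    unfolding cadj_conj_entry by (simp add: sum_distrib_right)
  hence "\<bar>\<mu> k - c\<bar> = norm (\<Sum>b\<in>UNIV. \<Sum>a\<in>UNIV. cnj (V $ a $ k) * W $ a $ b * V $ b $ k)"
    by (metis norm_of_real real_norm_def)
  also have "\<dots> \<le> (\<Sum>b\<in>UNIV. \<Sum>a\<in>UNIV. norm (cnj (V $ a $ k) * W $ a $ b * V $ b $ k))"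
    by (rule order.trans[OF norm_sum sum_mono]) (rule norm_sum)
  also have "\<dots> \<le> (\<Sum>b\<in>(UNIV::'n set). \<Sum>a\<in>(UNIV::'n set). norm W)"
  proof (intro sum_mono)
    fix a b
    have "norm (V $ a $ k) * norm (W $ a $ b) * norm (V $ b $ k) \<le> 1 * norm W * 1"
      by (intro mult_mono unitary_entry[OF u] norm_entry) auto
    thus "norm (cnj (V $ a $ k) * W $ a $ b * V $ b $ k) \<le> norm W" by (simp add: norm_mult)
  qed
  finally show ?thesis by (simp add: W_def)
qed




primrec mp :: "complex^'n^'n \<Rightarrow> nat \<Rightarrow> complex^'n^'n" where
  "mp Z 0 = mat 1"
| "mp Z (Suc m) = Z ** mp Z m"

definition Pk :: "complex^'n^'n \<Rightarrow> nat \<Rightarrow> complex^'n^'n" where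
  "Pk Z K = (\<Sum>m<K. (1 / fact m) *\<^sub>R mp Z m)"

lemma mp_decomp:
  assumes u: "unitary V" and Z: "Z = V ** rdiag \<mu> ** cadj V"
  shows "mp Z m = V ** rdiag (\<lambda>k. \<mu> k ^ m) ** cadj V"
proof (induction m)
  case 0 thus ?case using conj_unitary_one[OF u] by simp
next
  case (Suc m) thus ?case using conj_unitary[OF u] by (simp add: Z)
qed

lemma conj_zero: "V ** rdiag (\<lambda>k. 0) ** cadj V = (0::complex^'n^'n)"
  by (simp add: vec_eq_iff conj_entry)

lemma Pk_decomp:
  assumes u: "unitary V" and Z: "Z = V ** rdiag \<mu> ** cadj V"
  shows "Pk Z K = V ** rdiag (\<lambda>k. \<Sum>m<K. \<mu> k ^ m / fact m) ** cadj V"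
proof (induction K)
  case 0 thus ?case by (simp add: Pk_def conj_zero)
next
  case (Suc K)
  have "Pk Z (Suc K) = Pk Z K + (1 / fact K) *\<^sub>R mp Z K" by (simp add: Pk_def)
  also have "\<dots> = V ** rdiag (\<lambda>k. \<Sum>m<Suc K. \<mu> k ^ m / fact m) ** cadj V"
    unfolding Suc mp_decomp[OF u Z] conj_scaleR conj_add by simp
  finally show ?case .
qed

lemma mp_tendsto: "(G \<longlongrightarrow> L) F \<Longrightarrow> ((\<lambda>x. mp (G x) m) \<longlongrightarrow> mp L m) F"
  by (induction m) (simp_all add: tendsto_mmult)

lemma Pk_tendsto: "(G \<longlongrightarrow> L) F \<Longrightarrow> ((\<lambda>x. Pk (G x) K) \<longlongrightarrow> Pk L K) F"
  unfolding Pk_def by (intro tendsto_intros mp_tendsto)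

lemma exp_taylor_bound:
  fixes x R :: real
  assumes "\<bar>x\<bar> \<le> R"
  shows "\<bar>exp x - (\<Sum>m<K. x ^ m / fact m)\<bar> \<le> exp R * R ^ K / fact K"
proof -
  obtain t where t: "\<bar>t\<bar> \<le> \<bar>x\<bar>" and e: "exp x = (\<Sum>m<K. x ^ m / fact m) + exp t / fact K * x ^ K"
    using Maclaurin_exp_le[of x K] by blast
  have "\<bar>exp x - (\<Sum>m<K. x ^ m / fact m)\<bar> = exp t * \<bar>x\<bar> ^ K / fact K"
    by (simp add: e abs_mult power_abs)
  also have "\<dots> \<le> exp R * R ^ K / fact K"
    using t assms by (intro divide_right_mono mult_mono power_mono) auto
  finally show ?thesis .
qed

lemma mexp_Pk_bound:
  fixes Z :: "complex^'n^'n"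
  assumes h: "cadj Z = Z" and nz: "norm Z \<le> B"
  shows "norm (mexp Z - Pk Z K) \<le> real CARD('n) * real CARD('n) * (real CARD('n) *
      (exp (real CARD('n) * real CARD('n) * B) * (real CARD('n) * real CARD('n) * B) ^ K / fact K))"
proof -
  obtain V \<mu> where u: "unitary V" and Z: "Z = V ** rdiag \<mu> ** cadj V"
    using spectral[OF h] by blast
  have \<mu>: "\<bar>\<mu> k\<bar> \<le> real CARD('n) * real CARD('n) * B" for k
  proof -
    have "\<bar>\<mu> k - 0\<bar> \<le> real CARD('n) * real CARD('n) * norm (Z - 0 *\<^sub>R mat 1)"
      by (rule eig_bound[OF u Z])
    also have "\<dots> \<le> real CARD('n) * real CARD('n) * B" using nz by (simp add: mult_left_mono)
    finally show ?thesis by simp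
  qed
  have eq: "mexp Z - Pk Z K = V ** rdiag (\<lambda>k. exp (\<mu> k) - (\<Sum>m<K. \<mu> k ^ m / fact m)) ** cadj V"
    by (simp add: mexp_decomp[OF u Z] Pk_decomp[OF u Z] conj_diff)
  show ?thesis unfolding eq
    by (rule conj_bound[OF u exp_taylor_bound[OF \<mu>]])
qed

lemma mexp_tendsto:
  fixes G :: "'a \<Rightarrow> complex^'n^'n"
  assumes lim: "(G \<longlongrightarrow> L) F" and hG: "eventually (\<lambda>x. cadj (G x) = G x) F" and hL: "cadj L = L"
  shows "((\<lambda>x. mexp (G x)) \<longlongrightarrow> mexp L) F"
proof (rule tendstoI)
  fix e :: real assume e: "e > 0"
  define c where "c = real CARD('n)"
  define B where "B = norm L + 1"
  define R where "R = c * c * B"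
  define err where "err K = c * c * (c * (exp R * R ^ K / fact K))" for K
  have "(\<lambda>K. R ^ K /\<^sub>R fact K) \<longlonglongrightarrow> 0"
    by (rule summable_LIMSEQ_zero[OF summable_exp_generic])
  hence "(\<lambda>K. c * c * (c * (exp R * (R ^ K /\<^sub>R fact K)))) \<longlonglongrightarrow> c * c * (c * (exp R * 0))"
    by (intro tendsto_intros)
  hence "(\<lambda>K. err K) \<longlonglongrightarrow> 0" by (simp add: err_def divide_inverse mult_ac)
  hence "eventually (\<lambda>K. err K < e / 3) sequentially"
    using e by (intro order_tendstoD(2)) auto
  then obtain K where eK: "err K < e / 3"
    unfolding eventually_sequentially by blast
  have ev1: "eventually (\<lambda>x. norm (G x) < B) F"
    using tendsto_norm[OF lim] by (rule order_tendstoD) (simp add: B_def)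
  have ev2: "eventually (\<lambda>x. dist (Pk (G x) K) (Pk L K) < e / 3) F"
    using Pk_tendsto[OF lim, of K] by (rule tendstoD) (simp add: e)
  show "eventually (\<lambda>x. dist (mexp (G x)) (mexp L) < e) F"
    using ev1 ev2 hG
  proof eventually_elim
    case (elim x)
    have a: "norm (mexp (G x) - Pk (G x) K) \<le> err K"
      using mexp_Pk_bound[OF elim(3), of B K] elim(1) by (simp add: err_def R_def c_def)
    have b: "norm (mexp L - Pk L K) \<le> err K"
      using mexp_Pk_bound[OF hL, of B K] by (simp add: err_def R_def c_def B_def)
    have "dist (mexp (G x)) (mexp L) \<le> norm (mexp (G x) - Pk (G x) K) + dist (Pk (G x) K) (Pk L K) + norm (mexp L - Pk L K)"
    proof -
      have "mexp (G x) - mexp L = (mexp (G x) - Pk (G x) K) + (Pk (G x) K - Pk L K) - (mexp L - Pk L K)"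
        by simp
      hence "norm (mexp (G x) - mexp L) \<le> norm ((mexp (G x) - Pk (G x) K) + (Pk (G x) K - Pk L K)) + norm (mexp L - Pk L K)"
        by (metis norm_triangle_ineq4)
      also have "\<dots> \<le> norm (mexp (G x) - Pk (G x) K) + norm (Pk (G x) K - Pk L K) + norm (mexp L - Pk L K)"
        using norm_triangle_ineq[of "mexp (G x) - Pk (G x) K" "Pk (G x) K - Pk L K"] by linarith
      finally show ?thesis by (simp add: dist_norm)
    qed
    thus ?case using a b elim(2) eK by linarith
  qed
qed




lemma limit_pow:
  fixes F :: "real \<Rightarrow> complex^'n^'n"
  assumes d: "dq F (mat 1) L" and hF: "\<And>p. cadj (F p) = F p" and hL: "cadj L = L"
  shows "((\<lambda>p. mpow (F p) (1/p)) \<longlongrightarrow> mexp L) (at 0)"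
proof -
  define c where "c = real CARD('n)"
  have c1: "c \<ge> 1" by (simp add: c_def)
  obtain Vf \<mu>f where u: "\<And>p. unitary (Vf p)" and Fd: "\<And>p. F p = Vf p ** rdiag (\<mu>f p) ** cadj (Vf p)"
  proof -
    have "\<forall>p. \<exists>V\<mu>. unitary (fst V\<mu>) \<and> F p = fst V\<mu> ** rdiag (snd V\<mu>) ** cadj (fst V\<mu>)"
      using spectral[OF hF] by fastforce
    then obtain W where "\<forall>p. unitary (fst (W p)) \<and> F p = fst (W p) ** rdiag (snd (W p)) ** cadj (fst (W p))"
      by (metis choice)
    thus ?thesis using that[of "\<lambda>p. fst (W p)" "\<lambda>p. snd (W p)"] by blast
  qed
  define \<delta> where "\<delta> p = norm (F p - mat 1)" for p
  define q where "q p = (1/p) *\<^sub>R (F p - mat 1)" for p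
  have qL: "(q \<longlongrightarrow> L) (at 0)" using d unfolding dq_def q_def[abs_def] .
  have Fc: "(F \<longlongrightarrow> mat 1) (at 0)" by (rule dq_cont[OF d])
  have \<delta>0: "(\<delta> \<longlongrightarrow> 0) (at 0)"
    unfolding \<delta>_def using tendsto_norm[OF tendsto_diff[OF Fc tendsto_const[of "mat 1"]]] by simp
  have eig: "\<bar>\<mu>f p k - 1\<bar> \<le> c * c * \<delta> p" for p k
    using eig_bound[OF u Fd, of p k 1] by (simp add: c_def \<delta>_def)
  have ev: "eventually (\<lambda>p. p \<noteq> 0 \<and> \<delta> p < 1 / (2 * c * c)) (at 0)"
  proof -
    have "eventually (\<lambda>p. \<delta> p < 1 / (2 * c * c)) (at 0)"
      using c1 by (intro order_tendstoD(2)[OF \<delta>0]) simp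
    moreover have "eventually (\<lambda>p::real. p \<noteq> 0) (at 0)" by (simp add: eventually_at_filter)
    ultimately show ?thesis by eventually_elim simp
  qed
  have small: "\<bar>\<mu>f p k - 1\<bar> \<le> 1/2" if "\<delta> p < 1 / (2 * c * c)" for p k
  proof -
    have "c * c * \<delta> p \<le> c * c * (1 / (2 * c * c))"
      using that c1 by (intro mult_left_mono) auto
    also have "\<dots> = 1/2" using c1 by simp
    finally show ?thesis using eig[of p k] by linarith
  qed
  define G where "G p = (1/p) *\<^sub>R mlog (F p)" for p
  have Gd: "G p = Vf p ** rdiag (\<lambda>k. (1/p) * ln (\<mu>f p k)) ** cadj (Vf p)" for p
    by (simp add: G_def mlog_decomp[OF u Fd] conj_scaleR)
  have hG: "cadj (G p) = G p" for p by (simp add: Gd conj_hermitian)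
  have GqB: "norm (G p - q p) \<le> c * c * (c * (2 * (c * c) * (c * c) * \<delta> p * norm (q p)))"
    if p: "p \<noteq> 0" "\<delta> p < 1 / (2 * c * c)" for p
  proof -
    have qd: "q p = Vf p ** rdiag (\<lambda>k. (1/p) * (\<mu>f p k - 1)) ** cadj (Vf p)"
      using conj_unitary_one[OF u, of p] by (simp add: q_def Fd conj_diff conj_scaleR flip: conj_unitary_one[OF u, of p])
    have eq: "G p - q p = Vf p ** rdiag (\<lambda>k. (1/p) * ln (\<mu>f p k) - (1/p) * (\<mu>f p k - 1)) ** cadj (Vf p)"
      by (simp add: Gd qd conj_diff)
    have nq: "norm (q p) = \<delta> p / \<bar>p\<bar>" by (simp add: q_def \<delta>_def)
    have bnd: "\<bar>(1/p) * ln (\<mu>f p k) - (1/p) * (\<mu>f p k - 1)\<bar> \<le> 2 * (c * c) * (c * c) * \<delta> p * norm (q p)" for k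
    proof -
      have sk: "\<bar>\<mu>f p k - 1\<bar> \<le> 1/2" by (rule small[OF p(2)])
      have "\<bar>ln (1 + (\<mu>f p k - 1)) - (\<mu>f p k - 1)\<bar> \<le> 2 * (\<mu>f p k - 1)^2"
        by (rule abs_ln_one_plus_x_minus_x_bound[OF sk])
      also have "(\<mu>f p k - 1)^2 \<le> (c * c * \<delta> p)^2"
      proof -
        have "\<bar>\<mu>f p k - 1\<bar>^2 \<le> (c * c * \<delta> p)^2"
          using eig[of p k] by (intro power_mono) auto
        thus ?thesis by simp
      qed
      finally have "\<bar>ln (\<mu>f p k) - (\<mu>f p k - 1)\<bar> \<le> 2 * (c * c * \<delta> p)^2" by simp
      hence "\<bar>ln (\<mu>f p k) - (\<mu>f p k - 1)\<bar> / \<bar>p\<bar> \<le> 2 * (c * c * \<delta> p)^2 / \<bar>p\<bar>"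
        by (intro divide_right_mono) auto
      moreover have "\<bar>(1/p) * ln (\<mu>f p k) - (1/p) * (\<mu>f p k - 1)\<bar> = \<bar>ln (\<mu>f p k) - (\<mu>f p k - 1)\<bar> / \<bar>p\<bar>"
        by (simp add: right_diff_distrib[symmetric] abs_mult divide_inverse mult.commute)
      moreover have "2 * (c * c * \<delta> p)^2 / \<bar>p\<bar> = 2 * (c * c) * (c * c) * \<delta> p * norm (q p)"
        by (simp add: nq power2_eq_square)
      ultimately show ?thesis by simp
    qed
    show ?thesis unfolding eq c_def by (rule conj_bound[OF u bnd[unfolded c_def]])
  qed
  have "((\<lambda>p. c * c * (c * (2 * (c * c) * (c * c) * \<delta> p * norm (q p)))) \<longlongrightarrow>
       c * c * (c * (2 * (c * c) * (c * c) * 0 * norm L))) (at 0)"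
    by (intro tendsto_intros \<delta>0 qL)
  hence gl: "((\<lambda>p. c * c * (c * (2 * (c * c) * (c * c) * \<delta> p * norm (q p)))) \<longlongrightarrow> 0) (at 0)"
    by simp
  have "eventually (\<lambda>p. norm (G p - q p) \<le> c * c * (c * (2 * (c * c) * (c * c) * \<delta> p * norm (q p)))) (at 0)"
    using ev by eventually_elim (rule GqB; simp)
  hence GQ0: "((\<lambda>p. G p - q p) \<longlongrightarrow> 0) (at 0)"
    using gl by (rule Lim_null_comparison)
  have GL: "(G \<longlongrightarrow> L) (at 0)"
    using tendsto_add[OF GQ0 qL] by simp
  have mG: "((\<lambda>p. mexp (G p)) \<longlongrightarrow> mexp L) (at 0)"
    by (rule mexp_tendsto[OF GL _ hL]) (simp add: hG)
  have "eventually (\<lambda>p. mexp (G p) = mpow (F p) (1/p)) (at 0)"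
    using ev
  proof eventually_elim
    case (elim p)
    have pos: "\<mu>f p k > 0" for k using small[of p k] elim by linarith
    have "mexp (G p) = Vf p ** rdiag (\<lambda>k. exp ((1/p) * ln (\<mu>f p k))) ** cadj (Vf p)"
      by (simp add: mexp_decomp[OF u Gd])
    also have "\<dots> = Vf p ** rdiag (\<lambda>k. \<mu>f p k powr (1/p)) ** cadj (Vf p)"
      using pos by (simp add: powr_def less_imp_neq[symmetric] mult.commute)
    also have "\<dots> = mpow (F p) (1/p)" by (simp add: mpow_decomp[OF u Fd])
    finally show ?case .
  qed
  thus ?thesis using mG by (rule Lim_transform_eventually[rotated])
qed




lemma dq_cong: "(\<And>p. F p = G p) \<Longrightarrow> dq F a b \<Longrightarrow> dq G a b"
proof -
  assume "\<And>p. F p = G p" "dq F a b"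
  moreover have "F = G" using calculation(1) by (rule ext)
  ultimately show ?thesis by simp
qed

theorem lemma1:
  fixes \<rho> \<sigma> :: "complex^'n^'n"
    and N :: "complex^'n^'n \<Rightarrow> complex^'m^'m"
  assumes "posdef \<rho>" and "density \<rho>"
    and "posdef \<sigma>" and "density \<sigma>"
    and "clinear_map N" and "completely_positive N" and "trace_preserving N"
    and "strictly_positive N"
  shows "((\<lambda>p::real. mpow (mpow \<sigma> (p/2) **
              madjoint N (mpow (N \<sigma>) (-p/2) ** mpow (N \<rho>) p ** mpow (N \<sigma>) (-p/2))
              ** mpow \<sigma> (p/2)) (1/p))
          \<longlongrightarrow> mexp (mlog \<sigma> + madjoint N (mlog (N \<rho>) - mlog (N \<sigma>)))) (at 0)"
proof -
  note pr = assms(1) and ps = assms(3) and lin = assms(5) and tp = assms(7) and sp = assms(8)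
  have pNr: "posdef (N \<rho>)" and pNs: "posdef (N \<sigma>)"
    using sp pr ps by (auto simp: strictly_positive_def)
  have madj: "madjoint N = Nd N" by (rule madjoint_eq[OF lin])
  define B where "B p = mpow (N \<sigma>) (-p/2) ** mpow (N \<rho>) p ** mpow (N \<sigma>) (-p/2)" for p
  define X where "X p = mpow \<sigma> (p/2) ** Nd N (B p) ** mpow \<sigma> (p/2)" for p
  define L where "L = mlog \<sigma> + Nd N (mlog (N \<rho>) - mlog (N \<sigma>))"
  have d1: "dq (\<lambda>p. mpow (N \<sigma>) (-p/2)) (mat 1) ((-1/2) *\<^sub>R mlog (N \<sigma>))"
    by (rule dq_cong[OF _ dq_mpow[OF pNs, of "-1/2"]]) simp
  have d2: "dq (\<lambda>p. mpow (N \<rho>) p) (mat 1) (1 *\<^sub>R mlog (N \<rho>))"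
    by (rule dq_cong[OF _ dq_mpow[OF pNr, of 1]]) simp
  have d3: "dq (\<lambda>p. mpow \<sigma> (p/2)) (mat 1) ((1/2) *\<^sub>R mlog \<sigma>)"
    by (rule dq_cong[OF _ dq_mpow[OF ps, of "1/2"]]) simp
  have dB0: "dq B (mat 1 ** mat 1 ** mat 1)
     (((-1/2) *\<^sub>R mlog (N \<sigma>) ** mat 1 + mat 1 ** (1 *\<^sub>R mlog (N \<rho>))) ** mat 1 + (mat 1 ** mat 1) ** ((-1/2) *\<^sub>R mlog (N \<sigma>)))"
    unfolding B_def by (intro dq_mult d1 d2)
  have dB: "dq B (mat 1) (mlog (N \<rho>) - mlog (N \<sigma>))"
  proof -
    have "((-1/2) *\<^sub>R mlog (N \<sigma>) ** mat 1 + mat 1 ** (1 *\<^sub>R mlog (N \<rho>))) ** mat 1 + (mat 1 ** mat 1) ** ((-1/2) *\<^sub>R mlog (N \<sigma>))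
        = mlog (N \<rho>) - mlog (N \<sigma>)"
      by (simp add: scaleR_add_left[symmetric] algebra_simps)
    thus ?thesis using dB0 by simp
  qed
  have dNB: "dq (\<lambda>p. Nd N (B p)) (Nd N (mat 1)) (Nd N (mlog (N \<rho>) - mlog (N \<sigma>)))"
    by (rule dq_linear[OF Nd_bounded_linear dB])
  hence dNB': "dq (\<lambda>p. Nd N (B p)) (mat 1) (Nd N (mlog (N \<rho>) - mlog (N \<sigma>)))"
    by (simp add: Nd_one[OF lin tp])
  have dX0: "dq X (mat 1 ** mat 1 ** mat 1)
     (((1/2) *\<^sub>R mlog \<sigma> ** mat 1 + mat 1 ** Nd N (mlog (N \<rho>) - mlog (N \<sigma>))) ** mat 1 + (mat 1 ** mat 1) ** ((1/2) *\<^sub>R mlog \<sigma>))"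
    unfolding X_def by (intro dq_mult d3 dNB')
  have dX: "dq X (mat 1) L"
  proof -
    have "((1/2) *\<^sub>R mlog \<sigma> ** mat 1 + mat 1 ** Nd N (mlog (N \<rho>) - mlog (N \<sigma>))) ** mat 1 + (mat 1 ** mat 1) ** ((1/2) *\<^sub>R mlog \<sigma>) = L"
    proof -
      have h2: "(1/2) *\<^sub>R mlog \<sigma> + (1/2) *\<^sub>R mlog \<sigma> = mlog \<sigma>"
        by (simp only: scaleR_add_left[symmetric]) simp
      have "((1/2) *\<^sub>R mlog \<sigma> ** mat 1 + mat 1 ** Nd N (mlog (N \<rho>) - mlog (N \<sigma>))) ** mat 1 + (mat 1 ** mat 1) ** ((1/2) *\<^sub>R mlog \<sigma>)
          = ((1/2) *\<^sub>R mlog \<sigma> + (1/2) *\<^sub>R mlog \<sigma>) + Nd N (mlog (N \<rho>) - mlog (N \<sigma>))"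
        by (simp add: add_ac)
      thus ?thesis by (simp only: h2 L_def)
    qed
    thus ?thesis using dX0 by simp
  qed
  have hB: "cadj (B p) = B p" for p
    by (simp add: B_def cadj_mult mpow_herm pNr pNs matrix_mul_assoc)
  have hX: "cadj (X p) = X p" for p
    by (simp add: X_def cadj_mult mpow_herm ps Nd_herm[OF lin sp] hB matrix_mul_assoc)
  have hL: "cadj L = L"
    by (simp add: L_def cadj_add cadj_diff mlog_herm ps pNr pNs Nd_herm[OF lin sp])
  have "((\<lambda>p. mpow (X p) (1/p)) \<longlongrightarrow> mexp L) (at 0)"
    by (rule limit_pow[OF dX hX hL])
  thus ?thesis by (simp add: X_def B_def L_def madj)
qed



end
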